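(* Let $C_s=\begin{pmatrix}0&\mathbf 1_2\\-\mathbf 1_2&0\end{pmatrix}$ and $\mathrm{Sp}(4,\mathbb Z)=\{g\in M_4(\mathbb Z): g^TC_sg=C_s\}$. Consider the integer matrices $$S_1=\begin{pmatrix}0&0&1&0\\0&1&0&0\\-1&0&0&0\\0&0&0&1\end{pmatrix},\ S_2=\begin{pmatrix}1&0&0&0\\0&0&0&1\\0&0&1&0\\0&-1&0&0\end{pmatrix},\ Q_1=\begin{pmatrix}0&-1&0&0\\1&0&0&0\\0&0&0&-1\\0&0&1&0\end{pmatrix},\ Q_2=\begin{pmatrix}0&0&0&1\\0&0&1&0\\0&-1&0&0\\-1&0&0&0\end{pmatrix},$$ $$T_1=\begin{pmatrix}1&0&1&0\\0&1&0&0\\0&0&1&0\\0&0&0&1\end{pmatrix},\ T_2=\begin{pmatrix}1&0&0&0\\0&1&0&1\\0&0&1&0\\0&0&0&1\end{pmatrix},\ T_3=\begin{pmatrix}1&0&0&1\\0&1&1&0\\0&0&1&0\\0&0&0&1\end{pmatrix},\ T_4=\begin{pmatrix}1&1&0&0\\0&1&0&0\\0&0&1&0\\0&0&-1&1\end{pmatrix},$$ $$T_5=\begin{pmatrix}1&0&0&0\\-1&1&0&0\\0&0&1&1\\0&0&0&1\end{pmatrix},\ T_6=\begin{pmatrix}1&0&0&0\\0&1&0&0\\-1&0&1&0\\0&0&0&1\end{pmatrix},\ T_7=\begin{pmatrix}1&0&0&0\\0&1&0&0\\0&-1&1&0\\-1&0&0&1\end{pmatrix},\ T_8=\begin{pmatrix}1&0&0&0\\0&1&0&0\\0&0&1&0\\0&-1&0&1\end{pmatrix}.$$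 Then all these matrices lie in $\mathrm{Sp}(4,\mathbb Z)$, and: (i) the group $\mathfrak P_{32}$ generated by $S_1,S_2,Q_1,Q_2$ is finite of order $32$; it is generated by $\mathcal A=Q_1S_1$ and $\mathcal B=Q_2^3$, which satisfy $\mathcal A^8=\mathcal B^4=(\mathcal B\mathcal A)^4=\mathbf 1_4$; (ii) the set $\{\gamma T\gamma^{-1}:\gamma\in\mathfrak P_{32},\ T\in\{T_1^{\pm1},T_2^{\pm1},T_3^{\pm1},T_4^{\pm1}\}\}$ consists of exactly $16$ matrices, namely $T_1^{\pm1},\dots,T_8^{\pm1}$; (iii) $(T_1T_6)^6=(T_2T_8)^6=(T_3T_7)^6=(T_4T_5)^6=\mathbf 1_4$; (iv) consequently, letting $\mathfrak T$ be the group generated by $T_1,\dots,T_8$ and $\Delta_{32,8}$ the subgroup of $\mathrm{Sp}(4,\mathbb Z)$ generated by $\mathfrak P_{32}$ and $\mathfrak T$, every element of $\Delta_{32,8}$ can be written as $\gamma\, t$ with $\gamma\in\mathfrak P_{32}$, $t\in\mathfrak T$, and $\mathfrak T$ is a normal subgroup of $\Delta_{32,8}$.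
   Context: $\mathrm{Sp}(4,\mathbb R)$ acts on the Siegel upper half-plane of degree 2 (complex symmetric $2\times2$ matrices $Z$ with positive definite imaginary part) by $Z\mapsto (AZ+B)(CZ+D)^{-1}$ for $g=\begin{pmatrix}A&B\\C&D\end{pmatrix}$; $T_1,\dots,T_8$ are unipotent (parabolic) and $S_1,S_2,Q_1,Q_2$ lie in the maximal compact subgroup. *)

theory Defs
  imports "HOL-Analysis.Analysis"
begin

type_synonym imat4 = "int^4^4"

text \<open>Matrices are given row by row: M $ i $ j is the entry in row i, column j.\<close>
definition mat4 :: "int list list \<Rightarrow> imat4" where
  "mat4 rs = vector (map vector rs)"

fun mpow :: "imat4 \<Rightarrow> nat \<Rightarrow> imat4" where
  "mpow A 0 = mat 1"
| "mpow A (Suc n) = A ** mpow A n"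

inductive_set gen_group :: "imat4 set \<Rightarrow> imat4 set" for S where
  one: "mat 1 \<in> gen_group S"
| gen: "s \<in> S \<Longrightarrow> s \<in> gen_group S"
| mult: "a \<in> gen_group S \<Longrightarrow> b \<in> gen_group S \<Longrightarrow> a ** b \<in> gen_group S"
| inv: "a \<in> gen_group S \<Longrightarrow> invertible a \<Longrightarrow> matrix_inv a \<in> gen_group S"

definition Cs :: imat4 where
  "Cs = mat4 [[0,0,1,0],[0,0,0,1],[-1,0,0,0],[0,-1,0,0]]"

definition Sp4Z :: "imat4 set" where
  "Sp4Z = {g. transpose g ** Cs ** g = Cs}"

definition S1 :: imat4 where "S1 = mat4 [[0,0,1,0],[0,1,0,0],[-1,0,0,0],[0,0,0,1]]"
definition S2 :: imat4 where "S2 = mat4 [[1,0,0,0],[0,0,0,1],[0,0,1,0],[0,-1,0,0]]"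
definition Q1 :: imat4 where "Q1 = mat4 [[0,-1,0,0],[1,0,0,0],[0,0,0,-1],[0,0,1,0]]"
definition Q2 :: imat4 where "Q2 = mat4 [[0,0,0,1],[0,0,1,0],[0,-1,0,0],[-1,0,0,0]]"

definition T1 :: imat4 where "T1 = mat4 [[1,0,1,0],[0,1,0,0],[0,0,1,0],[0,0,0,1]]"
definition T2 :: imat4 where "T2 = mat4 [[1,0,0,0],[0,1,0,1],[0,0,1,0],[0,0,0,1]]"
definition T3 :: imat4 where "T3 = mat4 [[1,0,0,1],[0,1,1,0],[0,0,1,0],[0,0,0,1]]"
definition T4 :: imat4 where "T4 = mat4 [[1,1,0,0],[0,1,0,0],[0,0,1,0],[0,0,-1,1]]"
definition T5 :: imat4 where "T5 = mat4 [[1,0,0,0],[-1,1,0,0],[0,0,1,1],[0,0,0,1]]"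
definition T6 :: imat4 where "T6 = mat4 [[1,0,0,0],[0,1,0,0],[-1,0,1,0],[0,0,0,1]]"
definition T7 :: imat4 where "T7 = mat4 [[1,0,0,0],[0,1,0,0],[0,-1,1,0],[-1,0,0,1]]"
definition T8 :: imat4 where "T8 = mat4 [[1,0,0,0],[0,1,0,0],[0,0,1,0],[0,-1,0,1]]"

definition P32 :: "imat4 set" where "P32 = gen_group {S1, S2, Q1, Q2}"
definition TT :: "imat4 set" where "TT = gen_group {T1, T2, T3, T4, T5, T6, T7, T8}"
definition Delta32_8 :: "imat4 set" where "Delta32_8 = gen_group (P32 \<union> TT)"

end

theory Submission
  imports Defs
begin


lemma vector_4 [simp]:
 "(vector [x,y,z,w] ::('a::zero)^4)$1 = x"
 "(vector [x,y,z,w] ::('a::zero)^4)$2 = y"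
 "(vector [x,y,z,w] ::('a::zero)^4)$3 = z"
 "(vector [x,y,z,w] ::('a::zero)^4)$4 = w"
  unfolding vector_def by simp_all

lemma mat4_mult: "mat4 [[a11,a12,a13,a14],[a21,a22,a23,a24],[a31,a32,a33,a34],[a41,a42,a43,a44]] ** mat4 [[b11,b12,b13,b14],[b21,b22,b23,b24],[b31,b32,b33,b34],[b41,b42,b43,b44]] = mat4 [[a11*b11+a12*b21+a13*b31+a14*b41,a11*b12+a12*b22+a13*b32+a14*b42,a11*b13+a12*b23+a13*b33+a14*b43,a11*b14+a12*b24+a13*b34+a14*b44],[a21*b11+a22*b21+a23*b31+a24*b41,a21*b12+a22*b22+a23*b32+a24*b42,a21*b13+a22*b23+a23*b33+a24*b43,a21*b14+a22*b24+a23*b34+a24*b44],[a31*b11+a32*b21+a33*b31+a34*b41,a31*b12+a32*b22+a33*b32+a34*b42,a31*b13+a32*b23+a33*b33+a34*b43,a31*b14+a32*b24+a33*b34+a34*b44],[a41*b11+a42*b21+a43*b31+a44*b41,a41*b12+a42*b22+a43*b32+a44*b42,a41*b13+a42*b23+a43*b33+a44*b43,a41*b14+a42*b24+a43*b34+a44*b44]]"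
  unfolding mat4_def by (simp add: vec_eq_iff forall_4 matrix_matrix_mult_def sum_4)

lemma mat4_eq: "(mat4 [[a11,a12,a13,a14],[a21,a22,a23,a24],[a31,a32,a33,a34],[a41,a42,a43,a44]] = mat4 [[b11,b12,b13,b14],[b21,b22,b23,b24],[b31,b32,b33,b34],[b41,b42,b43,b44]]) = (a11 = b11 \<and> a12 = b12 \<and> a13 = b13 \<and> a14 = b14 \<and> a21 = b21 \<and> a22 = b22 \<and> a23 = b23 \<and> a24 = b24 \<and> a31 = b31 \<and> a32 = b32 \<and> a33 = b33 \<and> a34 = b34 \<and> a41 = b41 \<and> a42 = b42 \<and> a43 = b43 \<and> a44 = b44)"
  unfolding mat4_def by (simp add: vec_eq_iff forall_4)

lemma mat4_transpose: "transpose (mat4 [[a11,a12,a13,a14],[a21,a22,a23,a24],[a31,a32,a33,a34],[a41,a42,a43,a44]]) = mat4 [[a11,a21,a31,a41],[a12,a22,a32,a42],[a13,a23,a33,a43],[a14,a24,a34,a44]]"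
  unfolding mat4_def by (simp add: vec_eq_iff forall_4 transpose_def)

lemma mat4_one: "(mat 1 :: imat4) = mat4 [[1,0,0,0],[0,1,0,0],[0,0,1,0],[0,0,0,1]]"
  unfolding mat4_def by (simp add: vec_eq_iff forall_4 mat_def)

lemma matrix_inv_unique:
  fixes A B :: "'a::semiring_1^'n^'n"
  assumes "A ** B = mat 1" "B ** A = mat 1"
  shows "matrix_inv A = B"
proof -
  have ex: "\<exists>A'. A ** A' = mat 1 \<and> A' ** A = mat 1" using assms by blast
  then have h: "A ** matrix_inv A = mat 1 \<and> matrix_inv A ** A = mat 1"
    unfolding matrix_inv_def by (rule someI_ex)
  have "matrix_inv A = matrix_inv A ** (A ** B)" using assms by (simp add: matrix_mul_rid)
  also have "\<dots> = (matrix_inv A ** A) ** B" by (simp add: matrix_mul_assoc)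
  also have "\<dots> = B" using h by (simp add: matrix_mul_lid)
  finally show ?thesis .
qed

lemma inv_props:
  fixes A :: "'a::semiring_1^'n^'n"
  assumes "invertible A"
  shows "A ** matrix_inv A = mat 1" "matrix_inv A ** A = mat 1"
proof -
  have ex: "\<exists>A'. A ** A' = mat 1 \<and> A' ** A = mat 1" using assms unfolding invertible_def by blast
  then have h: "A ** matrix_inv A = mat 1 \<and> matrix_inv A ** A = mat 1"
    unfolding matrix_inv_def by (rule someI_ex)
  then show "A ** matrix_inv A = mat 1" "matrix_inv A ** A = mat 1" by auto
qed

lemma invertible_inv:
  fixes A :: "'a::semiring_1^'n^'n"
  assumes "invertible A"
  shows "invertible (matrix_inv A)"
  using inv_props[OF assms] unfolding invertible_def by blast

lemma matrix_inv_mult: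
  fixes A B :: "'a::semiring_1^'n^'n"
  assumes "invertible A" "invertible B"
  shows "matrix_inv (A ** B) = matrix_inv B ** matrix_inv A"
proof (rule matrix_inv_unique)
  note a = inv_props[OF assms(1)] and b = inv_props[OF assms(2)]
  have "A ** B ** (matrix_inv B ** matrix_inv A) = A ** (B ** matrix_inv B) ** matrix_inv A"
    by (simp add: matrix_mul_assoc)
  then show "A ** B ** (matrix_inv B ** matrix_inv A) = mat 1" using a b by (simp add: matrix_mul_rid)
  have "matrix_inv B ** matrix_inv A ** (A ** B) = matrix_inv B ** (matrix_inv A ** A) ** B"
    by (simp add: matrix_mul_assoc)
  then show "matrix_inv B ** matrix_inv A ** (A ** B) = mat 1" using a b by (simp add: matrix_mul_lid)
qed

lemma matrix_inv_inv:
  fixes A :: "'a::semiring_1^'n^'n"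
  assumes "invertible A"
  shows "matrix_inv (matrix_inv A) = A"
  using inv_props[OF assms] by (intro matrix_inv_unique) auto

lemma invertible_one: "invertible (mat 1 :: 'a::semiring_1^'n^'n)"
  unfolding invertible_def by (auto simp: matrix_mul_lid)

lemma matrix_inv_one: "matrix_inv (mat 1 :: 'a::semiring_1^'n^'n) = mat 1"
  by (rule matrix_inv_unique) (auto simp: matrix_mul_lid)

inductive_set W :: "imat4 set \<Rightarrow> imat4 set" for S where
  W_one: "mat 1 \<in> W S"
| W_step: "s \<in> S \<Longrightarrow> w \<in> W S \<Longrightarrow> s ** w \<in> W S"

lemma W_sub: "a \<in> W S \<Longrightarrow> a \<in> gen_group S"
  by (induction rule: W.induct) (auto intro: gen_group.intros)

lemma W_mult: "a \<in> W S \<Longrightarrow> b \<in> W S \<Longrightarrow> a ** b \<in> W S"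
proof (induction rule: W.induct)
  case W_one then show ?case by (simp add: matrix_mul_lid)
next
  case (W_step s w) then show ?case by (metis matrix_mul_assoc W.W_step)
qed

lemma W_foldr: "set ws \<subseteq> S \<Longrightarrow> foldr (**) ws (mat 1) \<in> W S"
  by (induction ws) (auto intro: W.intros)

lemma W_inv:
  assumes "\<And>s. s \<in> S \<Longrightarrow> invertible s \<and> matrix_inv s \<in> W S"
  shows "a \<in> W S \<Longrightarrow> invertible a \<and> matrix_inv a \<in> W S"
proof (induction rule: W.induct)
  case W_one
  then show ?case by (simp add: invertible_one matrix_inv_one W.W_one)
next
  case (W_step s w)
  then show ?case using assms[OF W_step(1)]
    by (simp add: invertible_mult matrix_inv_mult W_mult)
qed

lemma gen_W:
  assumes "\<And>s. s \<in> S \<Longrightarrow> invertible s \<and> matrix_inv s \<in> W S"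
  shows "gen_group S = W S"
proof
  show "gen_group S \<subseteq> W S"
  proof
    fix a assume "a \<in> gen_group S"
    then show "a \<in> W S"
    proof (induction rule: gen_group.induct)
      case one then show ?case by (rule W_one)
    next
      case (gen s) then show ?case using W_step[OF gen W_one] by (simp add: matrix_mul_rid)
    next
      case (mult a b) then show ?case by (simp add: W_mult)
    next
      case (inv a) then show ?case using W_inv[OF assms] by blast
    qed
  qed
  show "W S \<subseteq> gen_group S" using W_sub by blast
qed

lemma W_bound:
  assumes "mat 1 \<in> G" "\<And>s g. s \<in> S \<Longrightarrow> g \<in> G \<Longrightarrow> s ** g \<in> G"
  shows "a \<in> W S \<Longrightarrow> a \<in> G"
  by (induction rule: W.induct) (auto intro: assms)

lemma gen_mono:
  assumes "S \<subseteq> gen_group S'"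
  shows "a \<in> gen_group S \<Longrightarrow> a \<in> gen_group S'"
  by (induction rule: gen_group.induct) (use assms in \<open>auto intro: gen_group.intros\<close>)

lemma gen_invertible:
  assumes "\<And>s. s \<in> S \<Longrightarrow> invertible s"
  shows "a \<in> gen_group S \<Longrightarrow> invertible a"
  by (induction rule: gen_group.induct) (auto intro: assms invertible_mult invertible_one invertible_inv)

lemma inv_witness:
  fixes A B :: "'a::semiring_1^'n^'n"
  shows "A ** B = mat 1 \<Longrightarrow> B ** A = mat 1 \<Longrightarrow> invertible A"
  unfolding invertible_def by blast

lemma gen_mpow: "s \<in> gen_group S \<Longrightarrow> mpow s n \<in> gen_group S"
  by (induction n) (auto intro: gen_group.intros)

lemma P32_mem: "mat 1 \<in> P32" "S1 \<in> P32" "S2 \<in> P32" "Q1 \<in> P32" "Q2 \<in> P32"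
  unfolding P32_def by (auto intro: gen_group.intros)
definition Gset :: "imat4 set" where "Gset = {mat4 [[1,0,0,0],[0,1,0,0],[0,0,1,0],[0,0,0,1]], mat4 [[0,0,1,0],[0,1,0,0],[-1,0,0,0],[0,0,0,1]], mat4 [[1,0,0,0],[0,0,0,1],[0,0,1,0],[0,-1,0,0]], mat4 [[0,-1,0,0],[1,0,0,0],[0,0,0,-1],[0,0,1,0]], mat4 [[0,0,0,1],[0,0,1,0],[0,-1,0,0],[-1,0,0,0]], mat4 [[-1,0,0,0],[0,1,0,0],[0,0,-1,0],[0,0,0,1]], mat4 [[0,0,1,0],[0,0,0,1],[-1,0,0,0],[0,-1,0,0]], mat4 [[0,-1,0,0],[0,0,1,0],[0,0,0,-1],[-1,0,0,0]], mat4 [[0,0,0,1],[-1,0,0,0],[0,-1,0,0],[0,0,-1,0]], mat4 [[1,0,0,0],[0,-1,0,0],[0,0,1,0],[0,0,0,-1]], mat4 [[0,0,0,-1],[1,0,0,0],[0,1,0,0],[0,0,1,0]], mat4 [[-1,0,0,0],[0,-1,0,0],[0,0,-1,0],[0,0,0,-1]], mat4 [[0,0,1,0],[0,0,0,-1],[-1,0,0,0],[0,1,0,0]], mat4 [[0,0,-1,0],[0,0,0,1],[1,0,0,0],[0,-1,0,0]], mat4 [[0,0,-1,0],[0,1,0,0],[1,0,0,0],[0,0,0,1]], mat4 [[-1,0,0,0],[0,0,0,1],[0,0,-1,0],[0,-1,0,0]], mat4 [[0,-1,0,0],[-1,0,0,0],[0,0,0,-1],[0,0,-1,0]], mat4 [[0,0,0,1],[0,0,-1,0],[0,-1,0,0],[1,0,0,0]],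 mat4 [[0,0,1,0],[0,-1,0,0],[-1,0,0,0],[0,0,0,-1]], mat4 [[0,0,0,-1],[0,0,1,0],[0,1,0,0],[-1,0,0,0]], mat4 [[0,0,-1,0],[0,-1,0,0],[1,0,0,0],[0,0,0,-1]], mat4 [[-1,0,0,0],[0,0,0,-1],[0,0,-1,0],[0,1,0,0]], mat4 [[1,0,0,0],[0,0,0,-1],[0,0,1,0],[0,1,0,0]], mat4 [[0,1,0,0],[1,0,0,0],[0,0,0,1],[0,0,1,0]], mat4 [[0,1,0,0],[-1,0,0,0],[0,0,0,1],[0,0,-1,0]], mat4 [[0,0,0,-1],[0,0,-1,0],[0,1,0,0],[1,0,0,0]], mat4 [[0,-1,0,0],[0,0,-1,0],[0,0,0,-1],[1,0,0,0]], mat4 [[0,0,0,1],[1,0,0,0],[0,-1,0,0],[0,0,1,0]], mat4 [[0,0,0,-1],[-1,0,0,0],[0,1,0,0],[0,0,-1,0]], mat4 [[0,0,-1,0],[0,0,0,-1],[1,0,0,0],[0,1,0,0]], mat4 [[0,1,0,0],[0,0,1,0],[0,0,0,1],[-1,0,0,0]], mat4 [[0,1,0,0],[0,0,-1,0],[0,0,0,1],[1,0,0,0]]}"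

definition Ulit :: "imat4 set" where "Ulit = {mat4 [[1,0,-1,0],[0,1,0,0],[0,0,1,0],[0,0,0,1]], mat4 [[1,0,0,0],[0,1,0,-1],[0,0,1,0],[0,0,0,1]], mat4 [[1,0,0,-1],[0,1,-1,0],[0,0,1,0],[0,0,0,1]], mat4 [[1,-1,0,0],[0,1,0,0],[0,0,1,0],[0,0,1,1]], mat4 [[1,0,0,0],[1,1,0,0],[0,0,1,-1],[0,0,0,1]], mat4 [[1,0,0,0],[0,1,0,0],[1,0,1,0],[0,0,0,1]], mat4 [[1,0,0,0],[0,1,0,0],[0,1,1,0],[1,0,0,1]], mat4 [[1,0,0,0],[0,1,0,0],[0,0,1,0],[0,1,0,1]], mat4 [[1,0,1,0],[0,1,0,0],[0,0,1,0],[0,0,0,1]], mat4 [[1,0,0,0],[0,1,0,1],[0,0,1,0],[0,0,0,1]], mat4 [[1,0,0,1],[0,1,1,0],[0,0,1,0],[0,0,0,1]], mat4 [[1,1,0,0],[0,1,0,0],[0,0,1,0],[0,0,-1,1]], mat4 [[1,0,0,0],[-1,1,0,0],[0,0,1,1],[0,0,0,1]], mat4 [[1,0,0,0],[0,1,0,0],[-1,0,1,0],[0,0,0,1]], mat4 [[1,0,0,0],[0,1,0,0],[0,-1,1,0],[-1,0,0,1]], mat4 [[1,0,0,0],[0,1,0,0],[0,0,1,0],[0,-1,0,1]]}"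

lemma inv_S1: "matrix_inv S1 = mat4 [[0,0,-1,0],[0,1,0,0],[1,0,0,0],[0,0,0,1]]"
  by (rule matrix_inv_unique) (simp_all add: S1_def mat4_mult mat4_one)

lemma inv_S2: "matrix_inv S2 = mat4 [[1,0,0,0],[0,0,0,-1],[0,0,1,0],[0,1,0,0]]"
  by (rule matrix_inv_unique) (simp_all add: S2_def mat4_mult mat4_one)

lemma inv_Q1: "matrix_inv Q1 = mat4 [[0,1,0,0],[-1,0,0,0],[0,0,0,1],[0,0,-1,0]]"
  by (rule matrix_inv_unique) (simp_all add: Q1_def mat4_mult mat4_one)

lemma inv_Q2: "matrix_inv Q2 = mat4 [[0,0,0,-1],[0,0,-1,0],[0,1,0,0],[1,0,0,0]]"
  by (rule matrix_inv_unique) (simp_all add: Q2_def mat4_mult mat4_one)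

lemma inv_T1: "matrix_inv T1 = mat4 [[1,0,-1,0],[0,1,0,0],[0,0,1,0],[0,0,0,1]]"
  by (rule matrix_inv_unique) (simp_all add: T1_def mat4_mult mat4_one)

lemma inv_T2: "matrix_inv T2 = mat4 [[1,0,0,0],[0,1,0,-1],[0,0,1,0],[0,0,0,1]]"
  by (rule matrix_inv_unique) (simp_all add: T2_def mat4_mult mat4_one)

lemma inv_T3: "matrix_inv T3 = mat4 [[1,0,0,-1],[0,1,-1,0],[0,0,1,0],[0,0,0,1]]"
  by (rule matrix_inv_unique) (simp_all add: T3_def mat4_mult mat4_one)

lemma inv_T4: "matrix_inv T4 = mat4 [[1,-1,0,0],[0,1,0,0],[0,0,1,0],[0,0,1,1]]"
  by (rule matrix_inv_unique) (simp_all add: T4_def mat4_mult mat4_one)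

lemma inv_T5: "matrix_inv T5 = mat4 [[1,0,0,0],[1,1,0,0],[0,0,1,-1],[0,0,0,1]]"
  by (rule matrix_inv_unique) (simp_all add: T5_def mat4_mult mat4_one)

lemma inv_T6: "matrix_inv T6 = mat4 [[1,0,0,0],[0,1,0,0],[1,0,1,0],[0,0,0,1]]"
  by (rule matrix_inv_unique) (simp_all add: T6_def mat4_mult mat4_one)

lemma inv_T7: "matrix_inv T7 = mat4 [[1,0,0,0],[0,1,0,0],[0,1,1,0],[1,0,0,1]]"
  by (rule matrix_inv_unique) (simp_all add: T7_def mat4_mult mat4_one)

lemma inv_T8: "matrix_inv T8 = mat4 [[1,0,0,0],[0,1,0,0],[0,0,1,0],[0,1,0,1]]"
  by (rule matrix_inv_unique) (simp_all add: T8_def mat4_mult mat4_one)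

lemma Gel0: "mat4 [[1,0,0,0],[0,1,0,0],[0,0,1,0],[0,0,0,1]] \<in> W {S1, S2, Q1, Q2}"
  using W_foldr[of "[]" "{S1, S2, Q1, Q2}"] by (simp add: S1_def S2_def Q1_def Q2_def mat4_mult mat4_one)

lemma Gel1: "mat4 [[0,0,1,0],[0,1,0,0],[-1,0,0,0],[0,0,0,1]] \<in> W {S1, S2, Q1, Q2}"
  using W_foldr[of "[S1]" "{S1, S2, Q1, Q2}"] by (simp add: S1_def S2_def Q1_def Q2_def mat4_mult mat4_one)

lemma Gel2: "mat4 [[1,0,0,0],[0,0,0,1],[0,0,1,0],[0,-1,0,0]] \<in> W {S1, S2, Q1, Q2}"
  using W_foldr[of "[S2]" "{S1, S2, Q1, Q2}"] by (simp add: S1_def S2_def Q1_def Q2_def mat4_mult mat4_one)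

lemma Gel3: "mat4 [[0,-1,0,0],[1,0,0,0],[0,0,0,-1],[0,0,1,0]] \<in> W {S1, S2, Q1, Q2}"
  using W_foldr[of "[Q1]" "{S1, S2, Q1, Q2}"] by (simp add: S1_def S2_def Q1_def Q2_def mat4_mult mat4_one)

lemma Gel4: "mat4 [[0,0,0,1],[0,0,1,0],[0,-1,0,0],[-1,0,0,0]] \<in> W {S1, S2, Q1, Q2}"
  using W_foldr[of "[Q2]" "{S1, S2, Q1, Q2}"] by (simp add: S1_def S2_def Q1_def Q2_def mat4_mult mat4_one)

lemma Gel5: "mat4 [[-1,0,0,0],[0,1,0,0],[0,0,-1,0],[0,0,0,1]] \<in> W {S1, S2, Q1, Q2}"
  using W_foldr[of "[S1,S1]" "{S1, S2, Q1, Q2}"] by (simp add: S1_def S2_def Q1_def Q2_def mat4_mult mat4_one)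

lemma Gel6: "mat4 [[0,0,1,0],[0,0,0,1],[-1,0,0,0],[0,-1,0,0]] \<in> W {S1, S2, Q1, Q2}"
  using W_foldr[of "[S2,S1]" "{S1, S2, Q1, Q2}"] by (simp add: S1_def S2_def Q1_def Q2_def mat4_mult mat4_one)

lemma Gel7: "mat4 [[0,-1,0,0],[0,0,1,0],[0,0,0,-1],[-1,0,0,0]] \<in> W {S1, S2, Q1, Q2}"
  using W_foldr[of "[Q1,S1]" "{S1, S2, Q1, Q2}"] by (simp add: S1_def S2_def Q1_def Q2_def mat4_mult mat4_one)

lemma Gel8: "mat4 [[0,0,0,1],[-1,0,0,0],[0,-1,0,0],[0,0,-1,0]] \<in> W {S1, S2, Q1, Q2}"
  using W_foldr[of "[Q2,S1]" "{S1, S2, Q1, Q2}"] by (simp add: S1_def S2_def Q1_def Q2_def mat4_mult mat4_one)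

lemma Gel9: "mat4 [[1,0,0,0],[0,-1,0,0],[0,0,1,0],[0,0,0,-1]] \<in> W {S1, S2, Q1, Q2}"
  using W_foldr[of "[S2,S2]" "{S1, S2, Q1, Q2}"] by (simp add: S1_def S2_def Q1_def Q2_def mat4_mult mat4_one)

lemma Gel10: "mat4 [[0,0,0,-1],[1,0,0,0],[0,1,0,0],[0,0,1,0]] \<in> W {S1, S2, Q1, Q2}"
  using W_foldr[of "[Q1,S2]" "{S1, S2, Q1, Q2}"] by (simp add: S1_def S2_def Q1_def Q2_def mat4_mult mat4_one)

lemma Gel11: "mat4 [[-1,0,0,0],[0,-1,0,0],[0,0,-1,0],[0,0,0,-1]] \<in> W {S1, S2, Q1, Q2}"
  using W_foldr[of "[Q1,Q1]" "{S1, S2, Q1, Q2}"] by (simp add: S1_def S2_def Q1_def Q2_def mat4_mult mat4_one)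

lemma Gel12: "mat4 [[0,0,1,0],[0,0,0,-1],[-1,0,0,0],[0,1,0,0]] \<in> W {S1, S2, Q1, Q2}"
  using W_foldr[of "[Q2,Q1]" "{S1, S2, Q1, Q2}"] by (simp add: S1_def S2_def Q1_def Q2_def mat4_mult mat4_one)

lemma Gel13: "mat4 [[0,0,-1,0],[0,0,0,1],[1,0,0,0],[0,-1,0,0]] \<in> W {S1, S2, Q1, Q2}"
  using W_foldr[of "[Q1,Q2]" "{S1, S2, Q1, Q2}"] by (simp add: S1_def S2_def Q1_def Q2_def mat4_mult mat4_one)

lemma Gel14: "mat4 [[0,0,-1,0],[0,1,0,0],[1,0,0,0],[0,0,0,1]] \<in> W {S1, S2, Q1, Q2}"
  using W_foldr[of "[S1,S1,S1]" "{S1, S2, Q1, Q2}"] by (simp add: S1_def S2_def Q1_def Q2_def mat4_mult mat4_one)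

lemma Gel15: "mat4 [[-1,0,0,0],[0,0,0,1],[0,0,-1,0],[0,-1,0,0]] \<in> W {S1, S2, Q1, Q2}"
  using W_foldr[of "[S2,S1,S1]" "{S1, S2, Q1, Q2}"] by (simp add: S1_def S2_def Q1_def Q2_def mat4_mult mat4_one)

lemma Gel16: "mat4 [[0,-1,0,0],[-1,0,0,0],[0,0,0,-1],[0,0,-1,0]] \<in> W {S1, S2, Q1, Q2}"
  using W_foldr[of "[Q1,S1,S1]" "{S1, S2, Q1, Q2}"] by (simp add: S1_def S2_def Q1_def Q2_def mat4_mult mat4_one)

lemma Gel17: "mat4 [[0,0,0,1],[0,0,-1,0],[0,-1,0,0],[1,0,0,0]] \<in> W {S1, S2, Q1, Q2}"
  using W_foldr[of "[Q2,S1,S1]" "{S1, S2, Q1, Q2}"] by (simp add: S1_def S2_def Q1_def Q2_def mat4_mult mat4_one)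

lemma Gel18: "mat4 [[0,0,1,0],[0,-1,0,0],[-1,0,0,0],[0,0,0,-1]] \<in> W {S1, S2, Q1, Q2}"
  using W_foldr[of "[S2,S2,S1]" "{S1, S2, Q1, Q2}"] by (simp add: S1_def S2_def Q1_def Q2_def mat4_mult mat4_one)

lemma Gel19: "mat4 [[0,0,0,-1],[0,0,1,0],[0,1,0,0],[-1,0,0,0]] \<in> W {S1, S2, Q1, Q2}"
  using W_foldr[of "[Q1,S2,S1]" "{S1, S2, Q1, Q2}"] by (simp add: S1_def S2_def Q1_def Q2_def mat4_mult mat4_one)

lemma Gel20: "mat4 [[0,0,-1,0],[0,-1,0,0],[1,0,0,0],[0,0,0,-1]] \<in> W {S1, S2, Q1, Q2}"
  using W_foldr[of "[Q1,Q1,S1]" "{S1, S2, Q1, Q2}"] by (simp add: S1_def S2_def Q1_def Q2_def mat4_mult mat4_one)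

lemma Gel21: "mat4 [[-1,0,0,0],[0,0,0,-1],[0,0,-1,0],[0,1,0,0]] \<in> W {S1, S2, Q1, Q2}"
  using W_foldr[of "[Q2,Q1,S1]" "{S1, S2, Q1, Q2}"] by (simp add: S1_def S2_def Q1_def Q2_def mat4_mult mat4_one)

lemma Gel22: "mat4 [[1,0,0,0],[0,0,0,-1],[0,0,1,0],[0,1,0,0]] \<in> W {S1, S2, Q1, Q2}"
  using W_foldr[of "[S2,S2,S2]" "{S1, S2, Q1, Q2}"] by (simp add: S1_def S2_def Q1_def Q2_def mat4_mult mat4_one)

lemma Gel23: "mat4 [[0,1,0,0],[1,0,0,0],[0,0,0,1],[0,0,1,0]] \<in> W {S1, S2, Q1, Q2}"
  using W_foldr[of "[Q1,S2,S2]" "{S1, S2, Q1, Q2}"] by (simp add: S1_def S2_def Q1_def Q2_def mat4_mult mat4_one)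

lemma Gel24: "mat4 [[0,1,0,0],[-1,0,0,0],[0,0,0,1],[0,0,-1,0]] \<in> W {S1, S2, Q1, Q2}"
  using W_foldr[of "[Q1,Q1,Q1]" "{S1, S2, Q1, Q2}"] by (simp add: S1_def S2_def Q1_def Q2_def mat4_mult mat4_one)

lemma Gel25: "mat4 [[0,0,0,-1],[0,0,-1,0],[0,1,0,0],[1,0,0,0]] \<in> W {S1, S2, Q1, Q2}"
  using W_foldr[of "[Q2,Q1,Q1]" "{S1, S2, Q1, Q2}"] by (simp add: S1_def S2_def Q1_def Q2_def mat4_mult mat4_one)

lemma Gel26: "mat4 [[0,-1,0,0],[0,0,-1,0],[0,0,0,-1],[1,0,0,0]] \<in> W {S1, S2, Q1, Q2}"
  using W_foldr[of "[Q1,S1,S1,S1]" "{S1, S2, Q1, Q2}"] by (simp add: S1_def S2_def Q1_def Q2_def mat4_mult mat4_one)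

lemma Gel27: "mat4 [[0,0,0,1],[1,0,0,0],[0,-1,0,0],[0,0,1,0]] \<in> W {S1, S2, Q1, Q2}"
  using W_foldr[of "[Q2,S1,S1,S1]" "{S1, S2, Q1, Q2}"] by (simp add: S1_def S2_def Q1_def Q2_def mat4_mult mat4_one)

lemma Gel28: "mat4 [[0,0,0,-1],[-1,0,0,0],[0,1,0,0],[0,0,-1,0]] \<in> W {S1, S2, Q1, Q2}"
  using W_foldr[of "[Q1,S2,S1,S1]" "{S1, S2, Q1, Q2}"] by (simp add: S1_def S2_def Q1_def Q2_def mat4_mult mat4_one)

lemma Gel29: "mat4 [[0,0,-1,0],[0,0,0,-1],[1,0,0,0],[0,1,0,0]] \<in> W {S1, S2, Q1, Q2}"
  using W_foldr[of "[Q2,Q1,S1,S1]" "{S1, S2, Q1, Q2}"] by (simp add: S1_def S2_def Q1_def Q2_def mat4_mult mat4_one)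

lemma Gel30: "mat4 [[0,1,0,0],[0,0,1,0],[0,0,0,1],[-1,0,0,0]] \<in> W {S1, S2, Q1, Q2}"
  using W_foldr[of "[Q1,S2,S2,S1]" "{S1, S2, Q1, Q2}"] by (simp add: S1_def S2_def Q1_def Q2_def mat4_mult mat4_one)

lemma Gel31: "mat4 [[0,1,0,0],[0,0,-1,0],[0,0,0,1],[1,0,0,0]] \<in> W {S1, S2, Q1, Q2}"
  using W_foldr[of "[Q1,Q1,Q1,S1]" "{S1, S2, Q1, Q2}"] by (simp add: S1_def S2_def Q1_def Q2_def mat4_mult mat4_one)

lemmas Gels = Gel0 Gel1 Gel2 Gel3 Gel4 Gel5 Gel6 Gel7 Gel8 Gel9 Gel10 Gel11 Gel12 Gel13 Gel14 Gel15 Gel16 Gel17 Gel18 Gel19 Gel20 Gel21 Gel22 Gel23 Gel24 Gel25 Gel26 Gel27 Gel28 Gel29 Gel30 Gel31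
definition Tlit :: "imat4 set" where "Tlit = {mat4 [[1,0,-1,0],[0,1,0,0],[0,0,1,0],[0,0,0,1]], mat4 [[1,0,0,0],[0,1,0,-1],[0,0,1,0],[0,0,0,1]], mat4 [[1,0,0,-1],[0,1,-1,0],[0,0,1,0],[0,0,0,1]], mat4 [[1,-1,0,0],[0,1,0,0],[0,0,1,0],[0,0,1,1]], mat4 [[1,0,1,0],[0,1,0,0],[0,0,1,0],[0,0,0,1]], mat4 [[1,0,0,0],[0,1,0,1],[0,0,1,0],[0,0,0,1]], mat4 [[1,0,0,1],[0,1,1,0],[0,0,1,0],[0,0,0,1]], mat4 [[1,1,0,0],[0,1,0,0],[0,0,1,0],[0,0,-1,1]]}"

lemma invt_S1: "invertible S1"
  by (rule inv_witness[of _ "mat4 [[0,0,-1,0],[0,1,0,0],[1,0,0,0],[0,0,0,1]]"]) (simp_all add: S1_def mat4_mult mat4_one)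

lemma invt_S2: "invertible S2"
  by (rule inv_witness[of _ "mat4 [[1,0,0,0],[0,0,0,-1],[0,0,1,0],[0,1,0,0]]"]) (simp_all add: S2_def mat4_mult mat4_one)

lemma invt_Q1: "invertible Q1"
  by (rule inv_witness[of _ "mat4 [[0,1,0,0],[-1,0,0,0],[0,0,0,1],[0,0,-1,0]]"]) (simp_all add: Q1_def mat4_mult mat4_one)

lemma invt_Q2: "invertible Q2"
  by (rule inv_witness[of _ "mat4 [[0,0,0,-1],[0,0,-1,0],[0,1,0,0],[1,0,0,0]]"]) (simp_all add: Q2_def mat4_mult mat4_one)

lemma invt_T1: "invertible T1"
  by (rule inv_witness[of _ "mat4 [[1,0,-1,0],[0,1,0,0],[0,0,1,0],[0,0,0,1]]"]) (simp_all add: T1_def mat4_mult mat4_one)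

lemma invt_T2: "invertible T2"
  by (rule inv_witness[of _ "mat4 [[1,0,0,0],[0,1,0,-1],[0,0,1,0],[0,0,0,1]]"]) (simp_all add: T2_def mat4_mult mat4_one)

lemma invt_T3: "invertible T3"
  by (rule inv_witness[of _ "mat4 [[1,0,0,-1],[0,1,-1,0],[0,0,1,0],[0,0,0,1]]"]) (simp_all add: T3_def mat4_mult mat4_one)

lemma invt_T4: "invertible T4"
  by (rule inv_witness[of _ "mat4 [[1,-1,0,0],[0,1,0,0],[0,0,1,0],[0,0,1,1]]"]) (simp_all add: T4_def mat4_mult mat4_one)

lemma invt_T5: "invertible T5"
  by (rule inv_witness[of _ "mat4 [[1,0,0,0],[1,1,0,0],[0,0,1,-1],[0,0,0,1]]"]) (simp_all add: T5_def mat4_mult mat4_one)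

lemma invt_T6: "invertible T6"
  by (rule inv_witness[of _ "mat4 [[1,0,0,0],[0,1,0,0],[1,0,1,0],[0,0,0,1]]"]) (simp_all add: T6_def mat4_mult mat4_one)

lemma invt_T7: "invertible T7"
  by (rule inv_witness[of _ "mat4 [[1,0,0,0],[0,1,0,0],[0,1,1,0],[1,0,0,1]]"]) (simp_all add: T7_def mat4_mult mat4_one)

lemma invt_T8: "invertible T8"
  by (rule inv_witness[of _ "mat4 [[1,0,0,0],[0,1,0,0],[0,0,1,0],[0,1,0,1]]"]) (simp_all add: T8_def mat4_mult mat4_one)

lemma wit0: "mat4 [[1,0,1,0],[0,1,0,0],[0,0,1,0],[0,0,0,1]] \<in> {g ** T ** matrix_inv g | g T. g \<in> P32 \<and> T \<in> Tlit}"
proof -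
  have "mat4 [[1,0,1,0],[0,1,0,0],[0,0,1,0],[0,0,0,1]] = mat 1 ** mat4 [[1,0,1,0],[0,1,0,0],[0,0,1,0],[0,0,0,1]] ** matrix_inv (mat 1) \<and> mat 1 \<in> P32 \<and> mat4 [[1,0,1,0],[0,1,0,0],[0,0,1,0],[0,0,0,1]] \<in> Tlit"
    by (simp only: matrix_inv_one inv_S1 inv_S2 P32_mem) (simp add: S1_def S2_def mat4_mult mat4_one mat4_eq Tlit_def)
  then show ?thesis by blast
qed

lemma wit1: "mat4 [[1,0,0,0],[0,1,0,1],[0,0,1,0],[0,0,0,1]] \<in> {g ** T ** matrix_inv g | g T. g \<in> P32 \<and> T \<in> Tlit}"
proof -
  have "mat4 [[1,0,0,0],[0,1,0,1],[0,0,1,0],[0,0,0,1]] = mat 1 ** mat4 [[1,0,0,0],[0,1,0,1],[0,0,1,0],[0,0,0,1]] ** matrix_inv (mat 1) \<and> mat 1 \<in> P32 \<and> mat4 [[1,0,0,0],[0,1,0,1],[0,0,1,0],[0,0,0,1]] \<in> Tlit"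
    by (simp only: matrix_inv_one inv_S1 inv_S2 P32_mem) (simp add: S1_def S2_def mat4_mult mat4_one mat4_eq Tlit_def)
  then show ?thesis by blast
qed

lemma wit2: "mat4 [[1,0,0,1],[0,1,1,0],[0,0,1,0],[0,0,0,1]] \<in> {g ** T ** matrix_inv g | g T. g \<in> P32 \<and> T \<in> Tlit}"
proof -
  have "mat4 [[1,0,0,1],[0,1,1,0],[0,0,1,0],[0,0,0,1]] = mat 1 ** mat4 [[1,0,0,1],[0,1,1,0],[0,0,1,0],[0,0,0,1]] ** matrix_inv (mat 1) \<and> mat 1 \<in> P32 \<and> mat4 [[1,0,0,1],[0,1,1,0],[0,0,1,0],[0,0,0,1]] \<in> Tlit"
    by (simp only: matrix_inv_one inv_S1 inv_S2 P32_mem) (simp add: S1_def S2_def mat4_mult mat4_one mat4_eq Tlit_def)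
  then show ?thesis by blast
qed

lemma wit3: "mat4 [[1,1,0,0],[0,1,0,0],[0,0,1,0],[0,0,-1,1]] \<in> {g ** T ** matrix_inv g | g T. g \<in> P32 \<and> T \<in> Tlit}"
proof -
  have "mat4 [[1,1,0,0],[0,1,0,0],[0,0,1,0],[0,0,-1,1]] = mat 1 ** mat4 [[1,1,0,0],[0,1,0,0],[0,0,1,0],[0,0,-1,1]] ** matrix_inv (mat 1) \<and> mat 1 \<in> P32 \<and> mat4 [[1,1,0,0],[0,1,0,0],[0,0,1,0],[0,0,-1,1]] \<in> Tlit"
    by (simp only: matrix_inv_one inv_S1 inv_S2 P32_mem) (simp add: S1_def S2_def mat4_mult mat4_one mat4_eq Tlit_def)
  then show ?thesis by blast
qed

lemma wit4: "mat4 [[1,0,0,0],[-1,1,0,0],[0,0,1,1],[0,0,0,1]] \<in> {g ** T ** matrix_inv g | g T. g \<in> P32 \<and> T \<in> Tlit}"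
proof -
  have "mat4 [[1,0,0,0],[-1,1,0,0],[0,0,1,1],[0,0,0,1]] = S1 ** mat4 [[1,0,0,-1],[0,1,-1,0],[0,0,1,0],[0,0,0,1]] ** matrix_inv (S1) \<and> S1 \<in> P32 \<and> mat4 [[1,0,0,-1],[0,1,-1,0],[0,0,1,0],[0,0,0,1]] \<in> Tlit"
    by (simp only: matrix_inv_one inv_S1 inv_S2 P32_mem) (simp add: S1_def S2_def mat4_mult mat4_one mat4_eq Tlit_def)
  then show ?thesis by blast
qed

lemma wit5: "mat4 [[1,0,0,0],[0,1,0,0],[-1,0,1,0],[0,0,0,1]] \<in> {g ** T ** matrix_inv g | g T. g \<in> P32 \<and> T \<in> Tlit}"
proof -
  have "mat4 [[1,0,0,0],[0,1,0,0],[-1,0,1,0],[0,0,0,1]] = S1 ** mat4 [[1,0,1,0],[0,1,0,0],[0,0,1,0],[0,0,0,1]] ** matrix_inv (S1) \<and> S1 \<in> P32 \<and> mat4 [[1,0,1,0],[0,1,0,0],[0,0,1,0],[0,0,0,1]] \<in> Tlit"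
    by (simp only: matrix_inv_one inv_S1 inv_S2 P32_mem) (simp add: S1_def S2_def mat4_mult mat4_one mat4_eq Tlit_def)
  then show ?thesis by blast
qed

lemma wit6: "mat4 [[1,0,0,0],[0,1,0,0],[0,-1,1,0],[-1,0,0,1]] \<in> {g ** T ** matrix_inv g | g T. g \<in> P32 \<and> T \<in> Tlit}"
proof -
  have "mat4 [[1,0,0,0],[0,1,0,0],[0,-1,1,0],[-1,0,0,1]] = S1 ** mat4 [[1,1,0,0],[0,1,0,0],[0,0,1,0],[0,0,-1,1]] ** matrix_inv (S1) \<and> S1 \<in> P32 \<and> mat4 [[1,1,0,0],[0,1,0,0],[0,0,1,0],[0,0,-1,1]] \<in> Tlit"
    by (simp only: matrix_inv_one inv_S1 inv_S2 P32_mem) (simp add: S1_def S2_def mat4_mult mat4_one mat4_eq Tlit_def)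
  then show ?thesis by blast
qed

lemma wit7: "mat4 [[1,0,0,0],[0,1,0,0],[0,0,1,0],[0,-1,0,1]] \<in> {g ** T ** matrix_inv g | g T. g \<in> P32 \<and> T \<in> Tlit}"
proof -
  have "mat4 [[1,0,0,0],[0,1,0,0],[0,0,1,0],[0,-1,0,1]] = S2 ** mat4 [[1,0,0,0],[0,1,0,1],[0,0,1,0],[0,0,0,1]] ** matrix_inv (S2) \<and> S2 \<in> P32 \<and> mat4 [[1,0,0,0],[0,1,0,1],[0,0,1,0],[0,0,0,1]] \<in> Tlit"
    by (simp only: matrix_inv_one inv_S1 inv_S2 P32_mem) (simp add: S1_def S2_def mat4_mult mat4_one mat4_eq Tlit_def)
  then show ?thesis by blast
qed

lemma wit8: "mat4 [[1,0,-1,0],[0,1,0,0],[0,0,1,0],[0,0,0,1]] \<in> {g ** T ** matrix_inv g | g T. g \<in> P32 \<and> T \<in> Tlit}"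
proof -
  have "mat4 [[1,0,-1,0],[0,1,0,0],[0,0,1,0],[0,0,0,1]] = mat 1 ** mat4 [[1,0,-1,0],[0,1,0,0],[0,0,1,0],[0,0,0,1]] ** matrix_inv (mat 1) \<and> mat 1 \<in> P32 \<and> mat4 [[1,0,-1,0],[0,1,0,0],[0,0,1,0],[0,0,0,1]] \<in> Tlit"
    by (simp only: matrix_inv_one inv_S1 inv_S2 P32_mem) (simp add: S1_def S2_def mat4_mult mat4_one mat4_eq Tlit_def)
  then show ?thesis by blast
qed

lemma wit9: "mat4 [[1,0,0,0],[0,1,0,-1],[0,0,1,0],[0,0,0,1]] \<in> {g ** T ** matrix_inv g | g T. g \<in> P32 \<and> T \<in> Tlit}"
proof -
  have "mat4 [[1,0,0,0],[0,1,0,-1],[0,0,1,0],[0,0,0,1]] = mat 1 ** mat4 [[1,0,0,0],[0,1,0,-1],[0,0,1,0],[0,0,0,1]] ** matrix_inv (mat 1) \<and> mat 1 \<in> P32 \<and> mat4 [[1,0,0,0],[0,1,0,-1],[0,0,1,0],[0,0,0,1]] \<in> Tlit"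
    by (simp only: matrix_inv_one inv_S1 inv_S2 P32_mem) (simp add: S1_def S2_def mat4_mult mat4_one mat4_eq Tlit_def)
  then show ?thesis by blast
qed

lemma wit10: "mat4 [[1,0,0,-1],[0,1,-1,0],[0,0,1,0],[0,0,0,1]] \<in> {g ** T ** matrix_inv g | g T. g \<in> P32 \<and> T \<in> Tlit}"
proof -
  have "mat4 [[1,0,0,-1],[0,1,-1,0],[0,0,1,0],[0,0,0,1]] = mat 1 ** mat4 [[1,0,0,-1],[0,1,-1,0],[0,0,1,0],[0,0,0,1]] ** matrix_inv (mat 1) \<and> mat 1 \<in> P32 \<and> mat4 [[1,0,0,-1],[0,1,-1,0],[0,0,1,0],[0,0,0,1]] \<in> Tlit"
    by (simp only: matrix_inv_one inv_S1 inv_S2 P32_mem) (simp add: S1_def S2_def mat4_mult mat4_one mat4_eq Tlit_def)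
  then show ?thesis by blast
qed

lemma wit11: "mat4 [[1,-1,0,0],[0,1,0,0],[0,0,1,0],[0,0,1,1]] \<in> {g ** T ** matrix_inv g | g T. g \<in> P32 \<and> T \<in> Tlit}"
proof -
  have "mat4 [[1,-1,0,0],[0,1,0,0],[0,0,1,0],[0,0,1,1]] = mat 1 ** mat4 [[1,-1,0,0],[0,1,0,0],[0,0,1,0],[0,0,1,1]] ** matrix_inv (mat 1) \<and> mat 1 \<in> P32 \<and> mat4 [[1,-1,0,0],[0,1,0,0],[0,0,1,0],[0,0,1,1]] \<in> Tlit"
    by (simp only: matrix_inv_one inv_S1 inv_S2 P32_mem) (simp add: S1_def S2_def mat4_mult mat4_one mat4_eq Tlit_def)
  then show ?thesis by blast
qed

lemma wit12: "mat4 [[1,0,0,0],[1,1,0,0],[0,0,1,-1],[0,0,0,1]] \<in> {g ** T ** matrix_inv g | g T. g \<in> P32 \<and> T \<in> Tlit}"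
proof -
  have "mat4 [[1,0,0,0],[1,1,0,0],[0,0,1,-1],[0,0,0,1]] = S1 ** mat4 [[1,0,0,1],[0,1,1,0],[0,0,1,0],[0,0,0,1]] ** matrix_inv (S1) \<and> S1 \<in> P32 \<and> mat4 [[1,0,0,1],[0,1,1,0],[0,0,1,0],[0,0,0,1]] \<in> Tlit"
    by (simp only: matrix_inv_one inv_S1 inv_S2 P32_mem) (simp add: S1_def S2_def mat4_mult mat4_one mat4_eq Tlit_def)
  then show ?thesis by blast
qed

lemma wit13: "mat4 [[1,0,0,0],[0,1,0,0],[1,0,1,0],[0,0,0,1]] \<in> {g ** T ** matrix_inv g | g T. g \<in> P32 \<and> T \<in> Tlit}"
proof -
  have "mat4 [[1,0,0,0],[0,1,0,0],[1,0,1,0],[0,0,0,1]] = S1 ** mat4 [[1,0,-1,0],[0,1,0,0],[0,0,1,0],[0,0,0,1]] ** matrix_inv (S1) \<and> S1 \<in> P32 \<and> mat4 [[1,0,-1,0],[0,1,0,0],[0,0,1,0],[0,0,0,1]] \<in> Tlit"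
    by (simp only: matrix_inv_one inv_S1 inv_S2 P32_mem) (simp add: S1_def S2_def mat4_mult mat4_one mat4_eq Tlit_def)
  then show ?thesis by blast
qed

lemma wit14: "mat4 [[1,0,0,0],[0,1,0,0],[0,1,1,0],[1,0,0,1]] \<in> {g ** T ** matrix_inv g | g T. g \<in> P32 \<and> T \<in> Tlit}"
proof -
  have "mat4 [[1,0,0,0],[0,1,0,0],[0,1,1,0],[1,0,0,1]] = S1 ** mat4 [[1,-1,0,0],[0,1,0,0],[0,0,1,0],[0,0,1,1]] ** matrix_inv (S1) \<and> S1 \<in> P32 \<and> mat4 [[1,-1,0,0],[0,1,0,0],[0,0,1,0],[0,0,1,1]] \<in> Tlit"
    by (simp only: matrix_inv_one inv_S1 inv_S2 P32_mem) (simp add: S1_def S2_def mat4_mult mat4_one mat4_eq Tlit_def)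
  then show ?thesis by blast
qed

lemma wit15: "mat4 [[1,0,0,0],[0,1,0,0],[0,0,1,0],[0,1,0,1]] \<in> {g ** T ** matrix_inv g | g T. g \<in> P32 \<and> T \<in> Tlit}"
proof -
  have "mat4 [[1,0,0,0],[0,1,0,0],[0,0,1,0],[0,1,0,1]] = S2 ** mat4 [[1,0,0,0],[0,1,0,-1],[0,0,1,0],[0,0,0,1]] ** matrix_inv (S2) \<and> S2 \<in> P32 \<and> mat4 [[1,0,0,0],[0,1,0,-1],[0,0,1,0],[0,0,0,1]] \<in> Tlit"
    by (simp only: matrix_inv_one inv_S1 inv_S2 P32_mem) (simp add: S1_def S2_def mat4_mult mat4_one mat4_eq Tlit_def)
  then show ?thesis by blast
qed

lemmas wits = wit0 wit1 wit2 wit3 wit4 wit5 wit6 wit7 wit8 wit9 wit10 wit11 wit12 wit13 wit14 wit15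
lemma Sg_W: "s \<in> {S1, S2, Q1, Q2} \<Longrightarrow> invertible s \<and> matrix_inv s \<in> W {S1, S2, Q1, Q2}"
proof -
  have "matrix_inv S1 \<in> W {S1, S2, Q1, Q2}"
    using W_foldr[of "[S1,S1,S1]" "{S1, S2, Q1, Q2}"]
    by (simp only: inv_S1) (simp add: S1_def S2_def Q1_def Q2_def mat4_mult mat4_one)
  moreover have "matrix_inv S2 \<in> W {S1, S2, Q1, Q2}"
    using W_foldr[of "[S2,S2,S2]" "{S1, S2, Q1, Q2}"]
    by (simp only: inv_S2) (simp add: S1_def S2_def Q1_def Q2_def mat4_mult mat4_one)
  moreover have "matrix_inv Q1 \<in> W {S1, S2, Q1, Q2}"
    using W_foldr[of "[Q1,Q1,Q1]" "{S1, S2, Q1, Q2}"]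
    by (simp only: inv_Q1) (simp add: S1_def S2_def Q1_def Q2_def mat4_mult mat4_one)
  moreover have "matrix_inv Q2 \<in> W {S1, S2, Q1, Q2}"
    using W_foldr[of "[Q2,Q2,Q2]" "{S1, S2, Q1, Q2}"]
    by (simp only: inv_Q2) (simp add: S1_def S2_def Q1_def Q2_def mat4_mult mat4_one)
  moreover assume "s \<in> {S1, S2, Q1, Q2}"
  ultimately show ?thesis using invt_S1 invt_S2 invt_Q1 invt_Q2 by auto
qed

lemma P32_W: "P32 = W {S1, S2, Q1, Q2}"
  unfolding P32_def by (rule gen_W) (rule Sg_W)

lemma Gset_closed: "s \<in> {S1, S2, Q1, Q2} \<Longrightarrow> g \<in> Gset \<Longrightarrow> s ** g \<in> Gset"
proof -
  have "\<forall>g\<in>Gset. S1 ** g \<in> Gset" by (simp add: Gset_def S1_def mat4_mult mat4_eq)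
  moreover have "\<forall>g\<in>Gset. S2 ** g \<in> Gset" by (simp add: Gset_def S2_def mat4_mult mat4_eq)
  moreover have "\<forall>g\<in>Gset. Q1 ** g \<in> Gset" by (simp add: Gset_def Q1_def mat4_mult mat4_eq)
  moreover have "\<forall>g\<in>Gset. Q2 ** g \<in> Gset" by (simp add: Gset_def Q2_def mat4_mult mat4_eq)
  moreover assume "s \<in> {S1, S2, Q1, Q2}" "g \<in> Gset"
  ultimately show ?thesis by auto
qed

lemma P32_Gset: "P32 = Gset"
proof
  show "P32 \<subseteq> Gset"
  proof
    fix a assume "a \<in> P32"
    then have "a \<in> W {S1, S2, Q1, Q2}" by (simp add: P32_W)
    then show "a \<in> Gset"
    proof (rule W_bound[rotated 2])
      show "mat 1 \<in> Gset" by (simp add: Gset_def mat4_one mat4_eq)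
    qed (rule Gset_closed)
  qed
  show "Gset \<subseteq> P32" unfolding P32_W Gset_def using Gels by simp
qed

lemma card_P32: "finite P32 \<and> card P32 = 32"
  unfolding P32_Gset by (simp add: Gset_def mat4_eq)
lemma Ulit_eq: "{T1, T2, T3, T4, T5, T6, T7, T8} \<union> matrix_inv ` {T1, T2, T3, T4, T5, T6, T7, T8} = Ulit"
  by (simp only: image_insert image_empty inv_T1 inv_T2 inv_T3 inv_T4 inv_T5 inv_T6 inv_T7 inv_T8)
     (simp add: Ulit_def T1_def T2_def T3_def T4_def T5_def T6_def T7_def T8_def)

lemma Tlit_eq: "{T1, T2, T3, T4} \<union> matrix_inv ` {T1, T2, T3, T4} = Tlit"
  by (simp only: image_insert image_empty inv_T1 inv_T2 inv_T3 inv_T4)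
     (simp add: Tlit_def T1_def T2_def T3_def T4_def)

lemma Tlit_Ulit: "Tlit \<subseteq> Ulit"
  by (simp add: Tlit_def Ulit_def)

lemma card_Ulit: "card Ulit = 16"
  by (simp add: Ulit_def mat4_eq)

lemma Ulit_gen_conj: "s \<in> {S1, S2, Q1, Q2} \<Longrightarrow> U \<in> Ulit \<Longrightarrow> s ** U ** matrix_inv s \<in> Ulit"
proof -
  have "\<forall>U\<in>Ulit. S1 ** U ** matrix_inv S1 \<in> Ulit"
    by (simp only: inv_S1) (simp add: Ulit_def S1_def mat4_mult mat4_eq)
  moreover have "\<forall>U\<in>Ulit. S2 ** U ** matrix_inv S2 \<in> Ulit"
    by (simp only: inv_S2) (simp add: Ulit_def S2_def mat4_mult mat4_eq)
  moreover have "\<forall>U\<in>Ulit. Q1 ** U ** matrix_inv Q1 \<in> Ulit"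
    by (simp only: inv_Q1) (simp add: Ulit_def Q1_def mat4_mult mat4_eq)
  moreover have "\<forall>U\<in>Ulit. Q2 ** U ** matrix_inv Q2 \<in> Ulit"
    by (simp only: inv_Q2) (simp add: Ulit_def Q2_def mat4_mult mat4_eq)
  moreover assume "s \<in> {S1, S2, Q1, Q2}" "U \<in> Ulit"
  ultimately show ?thesis by auto
qed

lemma conj_W: "g \<in> W {S1, S2, Q1, Q2} \<Longrightarrow> U \<in> Ulit \<Longrightarrow> g ** U ** matrix_inv g \<in> Ulit"
proof (induction arbitrary: U rule: W.induct)
  case W_one
  then show ?case by (simp add: matrix_inv_one matrix_mul_lid matrix_mul_rid)
next
  case (W_step s w)
  have i_s: "invertible s" using Sg_W[OF W_step(1)] by simp
  have iw: "invertible w" using W_inv[OF Sg_W W_step(2)] by simp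
  have "s ** w ** U ** matrix_inv (s ** w) = s ** (w ** U ** matrix_inv w) ** matrix_inv s"
    by (simp add: matrix_inv_mult[OF i_s iw] matrix_mul_assoc[symmetric])
  then show ?case using W_step Ulit_gen_conj by simp
qed

lemma P32_conj: "g \<in> P32 \<Longrightarrow> U \<in> Ulit \<Longrightarrow> g ** U ** matrix_inv g \<in> Ulit"
  using conj_W P32_W by simp

lemma orbit: "{g ** T ** matrix_inv g | g T. g \<in> P32 \<and> T \<in> Tlit} = Ulit"
proof
  show "{g ** T ** matrix_inv g | g T. g \<in> P32 \<and> T \<in> Tlit} \<subseteq> Ulit"
    using P32_conj Tlit_Ulit by blast
  show "Ulit \<subseteq> {g ** T ** matrix_inv g | g T. g \<in> P32 \<and> T \<in> Tlit}"
    unfolding Ulit_def using wits by (simp only: insert_subset empty_subsetI simp_thms)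
qed

lemma P32_inv: "g \<in> P32 \<Longrightarrow> invertible g"
  unfolding P32_def by (rule gen_invertible) (auto simp: invt_S1 invt_S2 invt_Q1 invt_Q2)

lemma TT_inv: "t \<in> TT \<Longrightarrow> invertible t"
  unfolding TT_def by (rule gen_invertible)
    (auto simp: invt_T1 invt_T2 invt_T3 invt_T4 invt_T5 invt_T6 invt_T7 invt_T8)

lemma cancel_l: "invertible (g :: imat4) \<Longrightarrow> g ** (matrix_inv g ** X) = X"
  using inv_props(1) by (metis matrix_mul_assoc[symmetric] matrix_mul_lid)

lemma cancel_l2: "invertible (g :: imat4) \<Longrightarrow> matrix_inv g ** (g ** X) = X"
  using inv_props(2) by (metis matrix_mul_assoc[symmetric] matrix_mul_lid)

lemma TT_mult: "a \<in> TT \<Longrightarrow> b \<in> TT \<Longrightarrow> a ** b \<in> TT"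
  unfolding TT_def by (rule gen_group.mult)

lemma TT_minv: "a \<in> TT \<Longrightarrow> matrix_inv a \<in> TT"
  using TT_inv unfolding TT_def by (blast intro: gen_group.inv)

lemma P32_minv: "a \<in> P32 \<Longrightarrow> matrix_inv a \<in> P32"
  using P32_inv unfolding P32_def by (blast intro: gen_group.inv)

lemma P32_mult: "a \<in> P32 \<Longrightarrow> b \<in> P32 \<Longrightarrow> a ** b \<in> P32"
  unfolding P32_def by (rule gen_group.mult)

lemma Ulit_TT: "Ulit \<subseteq> TT"
proof -
  have h: "{T1, T2, T3, T4, T5, T6, T7, T8} \<subseteq> TT" unfolding TT_def by (auto intro: gen_group.gen)
  then have "matrix_inv ` {T1, T2, T3, T4, T5, T6, T7, T8} \<subseteq> TT" using TT_minv by blast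
  then show ?thesis using h Ulit_eq by blast
qed

lemma conj_TT:
  assumes g: "g \<in> P32"
  shows "t \<in> TT \<Longrightarrow> g ** t ** matrix_inv g \<in> TT"
  unfolding TT_def
proof (induction rule: gen_group.induct)
  case one
  then show ?case using inv_props(1)[OF P32_inv[OF g]] gen_group.one by (simp add: matrix_mul_rid)
next
  case (gen s)
  then have "s \<in> Ulit" using Ulit_eq by blast
  then show ?case using P32_conj[OF g] Ulit_TT unfolding TT_def by blast
next
  case (mult a b)
  have ig: "invertible g" using P32_inv[OF g] .
  have "g ** (a ** b) ** matrix_inv g = (g ** a ** matrix_inv g) ** (g ** b ** matrix_inv g)"
    by (simp add: matrix_mul_assoc[symmetric] cancel_l2[OF ig])
  then show ?case using mult gen_group.mult by metis
next
  case (inv a)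
  have ig: "invertible g" using P32_inv[OF g] .
  have i2: "invertible (g ** a ** matrix_inv g)"
    using ig inv(2) by (simp add: invertible_mult invertible_inv)
  have "matrix_inv (g ** a ** matrix_inv g) = g ** matrix_inv a ** matrix_inv g"
    using ig inv(2)
    by (simp add: matrix_inv_mult invertible_mult invertible_inv matrix_inv_inv matrix_mul_assoc[symmetric])
  then show ?case using gen_group.inv[OF inv(3) i2] by simp
qed

lemma Delta_decomp: "d \<in> Delta32_8 \<Longrightarrow> \<exists>g\<in>P32. \<exists>t\<in>TT. d = g ** t"
  unfolding Delta32_8_def
proof (induction rule: gen_group.induct)
  case one
  have "mat 1 \<in> TT" unfolding TT_def by (rule gen_group.one)
  then show ?case using P32_mem(1) by (metis matrix_mul_lid)
next
  case (gen s)
  have "mat 1 \<in> TT" unfolding TT_def by (rule gen_group.one)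
  then show ?case using gen P32_mem(1) by (metis Un_iff matrix_mul_lid matrix_mul_rid)
next
  case (mult a b)
  then obtain g t g' t' where gt: "g \<in> P32" "t \<in> TT" "a = g ** t" "g' \<in> P32" "t' \<in> TT" "b = g' ** t'"
    by blast
  have ig': "invertible g'" using P32_inv gt by blast
  define h where "h = matrix_inv g'"
  have h: "h \<in> P32" using P32_minv gt h_def by blast
  have mh: "matrix_inv h = g'" unfolding h_def using matrix_inv_inv[OF ig'] .
  have c: "h ** t ** g' \<in> TT" using conj_TT[OF h gt(2)] mh by simp
  have "a ** b = (g ** g') ** ((h ** t ** g') ** t')"
    unfolding gt h_def by (simp add: matrix_mul_assoc[symmetric] cancel_l[OF ig'])
  then show ?case using P32_mult[OF gt(1) gt(4)] TT_mult[OF c gt(5)] by blast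
next
  case (inv a)
  then obtain g t where gt: "g \<in> P32" "t \<in> TT" "a = g ** t" by blast
  have ig: "invertible g" using P32_inv gt by blast
  have it: "invertible t" using TT_inv gt by blast
  have c: "g ** matrix_inv t ** matrix_inv g \<in> TT" using conj_TT[OF gt(1) TT_minv[OF gt(2)]] .
  have "matrix_inv a = matrix_inv g ** (g ** matrix_inv t ** matrix_inv g)"
    unfolding gt by (simp add: matrix_inv_mult[OF ig it] matrix_mul_assoc[symmetric] cancel_l2[OF ig])
  then show ?case using P32_minv[OF gt(1)] c by blast
qed

lemma Delta_normal: "d \<in> Delta32_8 \<Longrightarrow> t' \<in> TT \<Longrightarrow> d ** t' ** matrix_inv d \<in> TT"
proof -
  assume d: "d \<in> Delta32_8" and t': "t' \<in> TT"
  obtain g t where gt: "g \<in> P32" "t \<in> TT" "d = g ** t" using Delta_decomp[OF d] by blast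
  have ig: "invertible g" using P32_inv gt by blast
  have it: "invertible t" using TT_inv gt by blast
  have "d ** t' ** matrix_inv d = g ** (t ** t' ** matrix_inv t) ** matrix_inv g"
    unfolding gt by (simp add: matrix_inv_mult[OF ig it] matrix_mul_assoc[symmetric])
  moreover have "t ** t' ** matrix_inv t \<in> TT" using TT_mult TT_minv gt t' by blast
  ultimately show ?thesis using conj_TT[OF gt(1)] by simp
qed

lemma AB_gen: "P32 = gen_group {Q1 ** S1, mpow Q2 3}"
proof
  show "P32 \<subseteq> gen_group {Q1 ** S1, mpow Q2 3}"
  proof
    fix x assume x: "x \<in> P32"
    have "S1 \<in> gen_group {Q1 ** S1, mpow Q2 3}"
      using W_sub[OF W_foldr[of "[Q1 ** S1, mpow Q2 3]" "{Q1 ** S1, mpow Q2 3}"]]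
      by (simp add: S1_def Q1_def Q2_def eval_nat_numeral mat4_mult mat4_one)
    moreover have "S2 \<in> gen_group {Q1 ** S1, mpow Q2 3}"
      using W_sub[OF W_foldr[of "[mpow Q2 3, Q1 ** S1]" "{Q1 ** S1, mpow Q2 3}"]]
      by (simp add: S2_def S1_def Q1_def Q2_def eval_nat_numeral mat4_mult mat4_one)
    moreover have "Q1 \<in> gen_group {Q1 ** S1, mpow Q2 3}"
      using W_sub[OF W_foldr[of "[Q1 ** S1, mpow Q2 3, Q1 ** S1, Q1 ** S1, Q1 ** S1]" "{Q1 ** S1, mpow Q2 3}"]]
      by (simp add: S1_def Q1_def Q2_def eval_nat_numeral mat4_mult mat4_one)
    moreover have "Q2 \<in> gen_group {Q1 ** S1, mpow Q2 3}"
      using W_sub[OF W_foldr[of "[mpow Q2 3, mpow Q2 3, mpow Q2 3]" "{Q1 ** S1, mpow Q2 3}"]]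
      by (simp add: S1_def Q1_def Q2_def eval_nat_numeral mat4_mult mat4_one)
    ultimately have "{S1, S2, Q1, Q2} \<subseteq> gen_group {Q1 ** S1, mpow Q2 3}" by blast
    then show "x \<in> gen_group {Q1 ** S1, mpow Q2 3}" using gen_mono x unfolding P32_def by blast
  qed
  show "gen_group {Q1 ** S1, mpow Q2 3} \<subseteq> P32"
  proof
    fix x assume x: "x \<in> gen_group {Q1 ** S1, mpow Q2 3}"
    have "{Q1 ** S1, mpow Q2 3} \<subseteq> P32" using P32_mem P32_mult gen_mpow[of Q2 "{S1, S2, Q1, Q2}"]
      unfolding P32_def by blast
    then show "x \<in> P32" using gen_mono x unfolding P32_def by blast
  qed
qed

theorem mainTheorem2:
  shows "{S1, S2, Q1, Q2, T1, T2, T3, T4, T5, T6, T7, T8} \<subseteq> Sp4Z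
    \<and> (finite P32 \<and> card P32 = 32
       \<and> P32 = gen_group {Q1 ** S1, mpow Q2 3}
       \<and> mpow (Q1 ** S1) 8 = mat 1 \<and> mpow (mpow Q2 3) 4 = mat 1
       \<and> mpow (mpow Q2 3 ** (Q1 ** S1)) 4 = mat 1)
    \<and> (let Ts = {T1, T2, T3, T4} \<union> matrix_inv ` {T1, T2, T3, T4};
           Us = {T1, T2, T3, T4, T5, T6, T7, T8} \<union> matrix_inv ` {T1, T2, T3, T4, T5, T6, T7, T8}
       in {g ** T ** matrix_inv g | g T. g \<in> P32 \<and> T \<in> Ts} = Us \<and> card Us = 16)
    \<and> mpow (T1 ** T6) 6 = mat 1 \<and> mpow (T2 ** T8) 6 = mat 1
    \<and> mpow (T3 ** T7) 6 = mat 1 \<and> mpow (T4 ** T5) 6 = mat 1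
    \<and> (\<forall>d \<in> Delta32_8. \<exists>g \<in> P32. \<exists>t \<in> TT. d = g ** t)
    \<and> (\<forall>d \<in> Delta32_8. \<forall>t \<in> TT. d ** t ** matrix_inv d \<in> TT)"
proof -
  have sp: "{S1, S2, Q1, Q2, T1, T2, T3, T4, T5, T6, T7, T8} \<subseteq> Sp4Z"
    by (simp add: Sp4Z_def Cs_def S1_def S2_def Q1_def Q2_def T1_def T2_def T3_def T4_def
        T5_def T6_def T7_def T8_def mat4_transpose mat4_mult mat4_eq)
  have pw1: "mpow (Q1 ** S1) 8 = mat 1 \<and> mpow (mpow Q2 3) 4 = mat 1
       \<and> mpow (mpow Q2 3 ** (Q1 ** S1)) 4 = mat 1"
    by (simp add: S1_def Q1_def Q2_def eval_nat_numeral mat4_mult mat4_one)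
  have pw2: "mpow (T1 ** T6) 6 = mat 1 \<and> mpow (T2 ** T8) 6 = mat 1
    \<and> mpow (T3 ** T7) 6 = mat 1 \<and> mpow (T4 ** T5) 6 = mat 1"
    by (simp add: T1_def T2_def T3_def T4_def T5_def T6_def T7_def T8_def
        eval_nat_numeral mat4_mult mat4_one)
  have orb: "let Ts = {T1, T2, T3, T4} \<union> matrix_inv ` {T1, T2, T3, T4};
           Us = {T1, T2, T3, T4, T5, T6, T7, T8} \<union> matrix_inv ` {T1, T2, T3, T4, T5, T6, T7, T8}
       in {g ** T ** matrix_inv g | g T. g \<in> P32 \<and> T \<in> Ts} = Us \<and> card Us = 16"
    unfolding Let_def Tlit_eq Ulit_eq using orbit card_Ulit by simp
  show ?thesis using sp card_P32 AB_gen pw1 orb pw2 Delta_decomp Delta_normal by blast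
qed

end
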